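(* Let $\mathcal{D}=(D,B,\mu)$ be a blueprint such that $B$ contains both a positive and a negative bias. Then there exist $\varepsilon_0>0$ and $C>0$, depending only on $B$, such that for every $\varepsilon\in(0,\varepsilon_0)$ there is a probability measure $\mu'$ on $B$ with $\sum_{b\in B}\mu'(b)b=0$ such that the blueprint $\mathcal{D}'=(D,B,\mu')$ satisfies: $\mathsf{Completeness}(\mathcal{D}')=\mathsf{Completeness}(\mathcal{D})$, $\mathsf{Soundness}(\mathcal{D}')\le\mathsf{Soundness}(\mathcal{D})+C\varepsilon$, and $\mu'(b)\ge\varepsilon$ for every $b\in B$.
   Context: $\Phi$ is the standard normal CDF. For $\rho\in[-1,1]$, $\Gamma_\rho(q_1,q_2)=\Pr[x\le\Phi^{-1}(q_1),\,y\le\Phi^{-1}(q_2)]$ for jointly Gaussian standard normals $x,y$ with correlation $\rho$. A configuration is $\theta=(b_i,b_j,b_{ij})\in[-1,1]^3$ with $-1+|b_i+b_j|\le b_{ij}\le1-|b_i-b_j|$. Its relative pairwise bias is $\rho(\theta)=\frac{b_{ij}-b_ib_j}{\sqrt{(1-b_i^2)(1-b_j^2)}}$ (or $0$ if the denominator is $0$). A blueprint $\mathcal{D}=(D,B,\mu)$: $D$ a finitely supported distribution on configurations, $B$ the set of biases (first two coordinates) appearing in its support, $\mu$ a probability measure on $B$ with $\sum_b\mu(b)b=0$. $\mathsf{Completeness}(\mathcal{D})=\mathbb{E}_{D}\frac{1-b_{ij}}{2}$. For $t:B\to[-1,1]$, $\mathsf{Soundness}(\mathcal{D},t)=\mathbb{E}_{\theta\sim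 D}[\frac{1-t(b_i)}{2}+\frac{1-t(b_j)}{2}-2\Gamma_{\rho(\theta)}(\frac{1-t(b_i)}{2},\frac{1-t(b_j)}{2})]$, and $\mathsf{Soundness}(\mathcal{D})$ is its maximum over $t$ with $\sum_b\mu(b)t(b)=0$. *)

theory Defs
  imports "HOL-Probability.Probability"
begin

definition std_normal :: "real measure" where
  "std_normal = density lborel std_normal_density"

definition Phi :: "real \<Rightarrow> real" where
  "Phi x = measure std_normal {..x}"

definition Phi_inv :: "real \<Rightarrow> ereal" where
  "Phi_inv q = (if q \<le> 0 then -\<infinity> else if 1 \<le> q then \<infinity>
                else ereal (THE x. Phi x = q))"

text \<open>Gamma_rho(q1,q2) = Pr[x \<le> Phi_inv q1, y \<le> Phi_inv q2] for standard normals x, y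
  with correlation rho, realised as x = g1, y = rho g1 + sqrt(1-rho^2) g2
  with g1, g2 independent standard normals.\<close>
definition Gamma :: "real \<Rightarrow> real \<Rightarrow> real \<Rightarrow> real" where
  "Gamma \<rho> q1 q2 = measure (std_normal \<Otimes>\<^sub>M std_normal)
     {(g1, g2). ereal g1 \<le> Phi_inv q1 \<and>
                ereal (\<rho> * g1 + sqrt (1 - \<rho>\<^sup>2) * g2) \<le> Phi_inv q2}"

type_synonym config = "real \<times> real \<times> real"

definition is_config :: "config \<Rightarrow> bool" where
  "is_config \<theta> = (case \<theta> of (bi, bj, bij_) \<Rightarrow>
     bi \<in> {-1..1} \<and> bj \<in> {-1..1} \<and> bij_ \<in> {-1..1} \<and>
     -1 + \<bar>bi + bj\<bar> \<le> bij_ \<and> bij_ \<le> 1 - \<bar>bi - bj\<bar>)"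

definition rel_bias :: "config \<Rightarrow> real" where
  "rel_bias \<theta> = (case \<theta> of (bi, bj, bij_) \<Rightarrow>
     (let d = sqrt ((1 - bi\<^sup>2) * (1 - bj\<^sup>2)) in
      if d = 0 then 0 else (bij_ - bi * bj) / d))"

definition biases :: "config pmf \<Rightarrow> real set" where
  "biases D = (\<lambda>\<theta>. fst \<theta>) ` set_pmf D \<union> (\<lambda>\<theta>. fst (snd \<theta>)) ` set_pmf D"

definition is_blueprint :: "config pmf \<Rightarrow> real set \<Rightarrow> real pmf \<Rightarrow> bool" where
  "is_blueprint D B \<mu> \<longleftrightarrow>
     finite (set_pmf D) \<and> (\<forall>\<theta>\<in>set_pmf D. is_config \<theta>) \<and> B = biases D \<and>
     set_pmf \<mu> \<subseteq> B \<and> (\<Sum>b\<in>B. pmf \<mu> b * b) = 0"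

definition completeness :: "config pmf \<Rightarrow> real" where
  "completeness D = (\<Sum>\<theta>\<in>set_pmf D. pmf D \<theta> * ((1 - snd (snd \<theta>)) / 2))"

definition soundness_t :: "config pmf \<Rightarrow> (real \<Rightarrow> real) \<Rightarrow> real" where
  "soundness_t D t = (\<Sum>\<theta>\<in>set_pmf D. pmf D \<theta> *
     (let qi = (1 - t (fst \<theta>)) / 2; qj = (1 - t (fst (snd \<theta>))) / 2 in
      qi + qj - 2 * Gamma (rel_bias \<theta>) qi qj))"

definition soundness :: "config pmf \<Rightarrow> real set \<Rightarrow> real pmf \<Rightarrow> real" where
  "soundness D B \<mu> = Sup {soundness_t D t | t.
     (\<forall>b\<in>B. t b \<in> {-1..1}) \<and> (\<Sum>b\<in>B. pmf \<mu> b * t b) = 0}"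

end

theory Submission
  imports Defs
begin


lemma sets_std_normal[simp, measurable_cong]: "sets std_normal = sets borel"
  by (simp add: std_normal_def)

lemma space_std_normal[simp]: "space std_normal = UNIV"
  by (simp add: std_normal_def)

lemma prob_space_std_normal: "prob_space std_normal"
  unfolding std_normal_def by (rule prob_space_normal_density) simp

lemma real_distribution_std_normal: "real_distribution std_normal"
  unfolding real_distribution_def real_distribution_axioms_def
  using prob_space_std_normal by (simp add: std_normal_def)

lemma snd_pos: "std_normal_density z > 0"
  by (rule normal_density_pos) simp

lemma Phi_cdf: "Phi = cdf std_normal"
  by (simp add: fun_eq_iff Phi_def cdf_def)

lemma std_normal_point: "measure std_normal {x} = 0"
proof -
  have "emeasure std_normal {x} = (\<integral>\<^sup>+z. ennreal (std_normal_density z) * indicator {x} z \<partial>lborel)"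
    unfolding std_normal_def by (simp add: emeasure_density)
  also have "\<dots> = 0"
    by (rule nn_integral_null_set) (auto intro: countable_imp_null_set_lborel)
  finally show ?thesis by (simp add: measure_def)
qed

lemma Phi_cont: "isCont Phi x"
  unfolding Phi_cdf using finite_borel_measure.isCont_cdf[OF real_distribution.finite_borel_measure_M[OF real_distribution_std_normal]] std_normal_point
  by simp

lemma Phi_mono: "x \<le> y \<Longrightarrow> Phi x \<le> Phi y"
  unfolding Phi_cdf using finite_borel_measure.cdf_nondecreasing[OF real_distribution.finite_borel_measure_M[OF real_distribution_std_normal]] by simp

lemma Phi_strict_mono: assumes "x < y" shows "Phi x < Phi y"
proof -
  have d: "Phi y - Phi x = measure std_normal {x<..y}"
    unfolding Phi_cdf using finite_borel_measure.cdf_diff_eq[OF real_distribution.finite_borel_measure_M[OF real_distribution_std_normal] assms] .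
  have e: "emeasure std_normal {x<..y} = (\<integral>\<^sup>+z. ennreal (std_normal_density z * indicator {x<..y} z) \<partial>lborel)"
    unfolding std_normal_def by (simp add: emeasure_density ennreal_mult' ennreal_indicator)
  have "emeasure std_normal {x<..y} \<noteq> 0"
  proof
    have h: "ennreal (std_normal_density z * indicator {x<..y} z) = 0 \<Longrightarrow> z \<notin> {x<..y}" for z
      using snd_pos[of z] by (auto simp: indicator_def split: if_splits)
    assume "emeasure std_normal {x<..y} = 0"
    then have "AE z in lborel. ennreal (std_normal_density z * indicator {x<..y} z) = 0"
      using e by (subst nn_integral_0_iff_AE[symmetric]) auto
    then have "AE z in lborel. z \<notin> {x<..y}"
      by (rule eventually_mono) (metis h)
    then have "emeasure lborel {x<..y} = 0"
      by (subst AE_iff_measurable[symmetric, where P="\<lambda>z. z \<notin> {x<..y}"]) auto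
    with assms show False by simp
  qed
  then have "measure std_normal {x<..y} > 0"
    using finite_measure.emeasure_eq_measure[OF prob_space.finite_measure[OF prob_space_std_normal]]
    by (simp add: zero_less_measure_iff)
  with d show ?thesis by simp
qed

lemma Phi_lim_top: "(Phi \<longlongrightarrow> 1) at_top"
  unfolding Phi_cdf by (rule real_distribution.cdf_lim_at_top_prob[OF real_distribution_std_normal])

lemma Phi_lim_bot: "(Phi \<longlongrightarrow> 0) at_bot"
  unfolding Phi_cdf by (rule finite_borel_measure.cdf_lim_at_bot[OF real_distribution.finite_borel_measure_M[OF real_distribution_std_normal]])

lemma Phi_ex1: assumes "0 < q" "q < 1" shows "\<exists>!x. Phi x = q"
proof -
  from Phi_lim_bot assms(1) have "eventually (\<lambda>x. Phi x < q) at_bot"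
    by (simp add: order_tendstoD(2))
  then obtain a where a: "Phi a < q" by (auto simp: eventually_at_bot_linorder)
  from Phi_lim_top assms(2) have "eventually (\<lambda>x. Phi x > q) at_top"
    by (simp add: order_tendstoD(1))
  then obtain b where b: "Phi b > q" by (auto simp: eventually_at_top_linorder)
  have ab: "a \<le> b" using a b Phi_mono by (meson le_less_trans linorder_le_cases not_less)
  have "\<exists>x\<ge>a. x \<le> b \<and> Phi x = q"
    using IVT[of Phi a q b] a b ab Phi_cont by auto
  then obtain x where "Phi x = q" by auto
  moreover have "Phi y = q \<Longrightarrow> y = x" for y
    using Phi_strict_mono \<open>Phi x = q\<close> by (metis less_irrefl linorder_neqE)
  ultimately show ?thesis by blast
qed

lemma Phi_inv_interior: assumes "0 < q" "q < 1" shows "Phi_inv q = ereal (THE x. Phi x = q)" "Phi (THE x. Phi x = q) = q"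
  using assms theI'[OF Phi_ex1[OF assms]] by (auto simp: Phi_inv_def)

lemma Phi_inv_measure: assumes "0 \<le> q" "q \<le> 1"
  shows "measure std_normal {g. ereal g \<le> Phi_inv q} = q"
proof -
  interpret P: prob_space std_normal by (rule prob_space_std_normal)
  consider "q = 0" | "q = 1" | "0 < q \<and> q < 1" using assms by linarith
  then show ?thesis
  proof cases
    case 1 then show ?thesis by (simp add: Phi_inv_def)
  next
    case 2 then have "{g. ereal g \<le> Phi_inv q} = space std_normal" by (simp add: Phi_inv_def)
    then show ?thesis using 2 P.prob_space by simp
  next
    case 3
    then have "{g. ereal g \<le> Phi_inv q} = {..(THE x. Phi x = q)}" using Phi_inv_interior by auto
    then show ?thesis using Phi_inv_interior 3 by (simp add: Phi_def)
  qed
qed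

lemma Phi_inv_mono: assumes "q \<le> q'" shows "Phi_inv q \<le> Phi_inv q'"
proof -
  consider "q \<le> 0" | "1 \<le> q'" | "0 < q \<and> q' < 1" by linarith
  then show ?thesis
  proof cases
    case 1 then show ?thesis by (simp add: Phi_inv_def)
  next
    case 2 then show ?thesis by (simp add: Phi_inv_def)
  next
    case 3
    then have i: "0 < q" "q < 1" "0 < q'" "q' < 1" using assms by auto
    have "(THE x. Phi x = q) \<le> (THE x. Phi x = q')"
      using Phi_inv_interior(2)[OF i(1,2)] Phi_inv_interior(2)[OF i(3,4)] assms Phi_strict_mono
      by (metis not_le order.strict_iff_not)
    then show ?thesis using Phi_inv_interior(1) i by simp
  qed
qed

lemma lipschitz_core:
  assumes M: "prob_space M" and X: "X \<in> borel_measurable M"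
    and dX: "distr M borel X = std_normal"
    and S: "S \<in> sets M" and T: "T \<in> sets M" and ST: "S \<subseteq> T"
    and TS: "T - S \<subseteq> {w\<in>space M. Phi_inv q < ereal (X w) \<and> ereal (X w) \<le> Phi_inv q'}"
    and q: "0 \<le> q" "q \<le> q'" "q' \<le> 1"
  shows "measure M T - measure M S \<le> q' - q"
proof -
  interpret M: prob_space M by (rule M)
  note [measurable] = X
  interpret P: prob_space std_normal by (rule prob_space_std_normal)
  let ?A = "{g. ereal g \<le> Phi_inv q}" and ?A' = "{g. ereal g \<le> Phi_inv q'}"
  have Am[measurable]: "?A \<in> sets borel" "?A' \<in> sets borel" by measurable
  have AA: "?A \<subseteq> ?A'" using Phi_inv_mono[OF q(2)] order_trans by auto
  have "measure M T - measure M S = measure M (T - S)"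
    using M.finite_measure_Diff[OF T S ST] by simp
  also have "\<dots> \<le> measure M {w\<in>space M. Phi_inv q < ereal (X w) \<and> ereal (X w) \<le> Phi_inv q'}"
    by (rule M.finite_measure_mono[OF TS]) measurable
  also have "{w\<in>space M. Phi_inv q < ereal (X w) \<and> ereal (X w) \<le> Phi_inv q'} = X -` (?A' - ?A) \<inter> space M"
    by auto
  also have "measure M \<dots> = measure (distr M borel X) (?A' - ?A)"
    by (rule measure_distr[symmetric]) (use X in auto)
  also have "\<dots> = measure std_normal (?A' - ?A)" by (simp add: dX)
  also have "\<dots> = measure std_normal ?A' - measure std_normal ?A"
    using P.finite_measure_Diff[of ?A' ?A] AA by simp
  also have "\<dots> = q' - q" using Phi_inv_measure q by simp
  finally show ?thesis .
qed

abbreviation SN2 :: "(real \<times> real) measure" where "SN2 \<equiv> std_normal \<Otimes>\<^sub>M std_normal"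

lemma prob_space_SN2: "prob_space SN2"
proof -
  interpret P: prob_space std_normal by (rule prob_space_std_normal)
  interpret PP: pair_prob_space std_normal std_normal ..
  show ?thesis by (rule PP.prob_space_axioms)
qed

lemma sets_SN2[simp, measurable_cong]: "sets SN2 = sets (borel \<Otimes>\<^sub>M borel)"
  by (rule sets_pair_measure_cong) simp_all

lemma space_SN2[simp]: "space SN2 = UNIV"
  by (simp add: space_pair_measure)

lemma distr_fst: "distr SN2 borel fst = std_normal"
proof -
  interpret P: prob_space std_normal by (rule prob_space_std_normal)
  have "distr SN2 borel fst = distr SN2 std_normal fst" by (rule distr_cong) simp_all
  also have "\<dots> = std_normal" by (rule P.distr_pair_fst)
  finally show ?thesis .
qed

lemma distr_snd: "distr SN2 borel snd = std_normal"
proof -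
  interpret P: prob_space std_normal by (rule prob_space_std_normal)
  interpret PP: pair_sigma_finite std_normal std_normal ..
  have "distr SN2 borel snd = distr (distr SN2 SN2 (\<lambda>(x, y). (y, x))) borel snd"
    by (subst PP.distr_pair_swap[symmetric]) simp
  also have "\<dots> = distr SN2 borel (snd \<circ> (\<lambda>(x, y). (y, x)))"
    by (rule distr_distr) measurable
  also have "snd \<circ> (\<lambda>(x, y). (y, x)) = (fst :: real \<times> real \<Rightarrow> real)" by auto
  finally show ?thesis using distr_fst by simp
qed

lemma std_normal_density_eq: "std_normal = density lborel std_normal_density"
  by (simp add: std_normal_def)

lemma distributed_of_distr:
  assumes "distr SN2 borel X = std_normal" "X \<in> borel_measurable SN2"
  shows "distributed SN2 lborel X std_normal_density"
proof -
  have "distr SN2 lborel X = distr SN2 borel X" by (rule distr_cong) simp_all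
  then show ?thesis using assms unfolding distributed_def std_normal_def by simp
qed

lemma distr_of_distributed:
  assumes "distributed SN2 lborel X std_normal_density"
  shows "distr SN2 borel X = std_normal"
proof -
  have "distr SN2 lborel X = distr SN2 borel X" by (rule distr_cong) simp_all
  then show ?thesis using assms unfolding distributed_def std_normal_def by simp
qed

lemma indep_fst_snd: "prob_space.indep_var SN2 borel fst borel snd"
proof -
  interpret P: prob_space SN2 by (rule prob_space_SN2)
  have "distr SN2 (borel \<Otimes>\<^sub>M borel) (\<lambda>x. (fst x, snd x)) = SN2"
    by (simp add: distr_id2)
  then show ?thesis
    by (subst P.indep_var_distribution_eq) (simp add: distr_fst distr_snd)
qed


lemma distr_Y:
  assumes r: "\<bar>\<rho>\<bar> \<le> 1"
  shows "distr SN2 borel (\<lambda>w. \<rho> * fst w + sqrt (1 - \<rho>\<^sup>2) * snd w) = std_normal"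
proof -
  interpret P: prob_space SN2 by (rule prob_space_SN2)
  have dF: "distributed SN2 lborel fst (normal_density 0 1)"
    by (rule distributed_of_distr[OF distr_fst]) measurable
  have dS: "distributed SN2 lborel snd (normal_density 0 1)"
    by (rule distributed_of_distr[OF distr_snd]) measurable
  consider "\<rho> = 0" | "\<bar>\<rho>\<bar> = 1" | "0 < \<bar>\<rho>\<bar> \<and> \<bar>\<rho>\<bar> < 1" using r by linarith
  then show ?thesis
  proof cases
    case 1
    then have "(\<lambda>w. \<rho> * fst w + sqrt (1 - \<rho>\<^sup>2) * snd w) = snd" by (simp add: fun_eq_iff)
    then show ?thesis using distr_snd by (simp only:)
  next
    case 2
    have "\<rho>\<^sup>2 = \<bar>\<rho>\<bar>\<^sup>2" by simp
    then have "\<rho>\<^sup>2 = 1" using 2 by simp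
    then have e: "(\<lambda>w. \<rho> * fst w + sqrt (1 - \<rho>\<^sup>2) * snd w) = (\<lambda>w. 0 + \<rho> * fst w)" by simp
    have r0: "\<rho> \<noteq> 0" using 2 by auto
    have "distributed SN2 lborel (\<lambda>w. 0 + \<rho> * fst w) (normal_density (0 + \<rho> * 0) (\<bar>\<rho>\<bar> * 1))"
      by (rule P.normal_density_affine[OF dF zero_less_one r0])
    then have "distributed SN2 lborel (\<lambda>w. \<rho> * fst w + sqrt (1 - \<rho>\<^sup>2) * snd w) (normal_density 0 1)"
      unfolding e using 2 by (simp only: mult_zero_right add_0 mult_1_right)
    then show ?thesis by (rule distr_of_distributed)
  next
    case 3
    define s where "s = sqrt (1 - \<rho>\<^sup>2)"
    have "\<rho>\<^sup>2 = \<bar>\<rho>\<bar>\<^sup>2" by simp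
    then have rr: "\<rho>\<^sup>2 < 1" using 3 by (metis abs_ge_zero abs_square_less_1 power2_abs)
    then have s: "s > 0" by (simp add: s_def)
    have d1: "distributed SN2 lborel (\<lambda>w. 0 + \<rho> * fst w) (normal_density (0 + \<rho> * 0) (\<bar>\<rho>\<bar> * 1))"
      by (rule P.normal_density_affine[OF dF]) (use 3 in auto)
    have d2: "distributed SN2 lborel (\<lambda>w. 0 + s * snd w) (normal_density (0 + s * 0) (\<bar>s\<bar> * 1))"
      by (rule P.normal_density_affine[OF dS]) (use s in auto)
    have ind: "P.indep_var borel ((\<lambda>x. 0 + \<rho> * x) \<circ> fst) borel ((\<lambda>x. 0 + s * x) \<circ> snd)"
      by (rule P.indep_var_compose[OF indep_fst_snd]) simp_all
    have "distributed SN2 lborel (\<lambda>w. (0 + \<rho> * fst w) + (0 + s * snd w))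
            (normal_density (0 + 0) (sqrt ((\<bar>\<rho>\<bar> * 1)\<^sup>2 + (\<bar>s\<bar> * 1)\<^sup>2)))"
      by (rule P.add_indep_normal) (use ind d1 d2 3 s in \<open>simp_all add: o_def\<close>)
    moreover have "(\<bar>\<rho>\<bar> * 1)\<^sup>2 + (\<bar>s\<bar> * 1)\<^sup>2 = 1" using rr by (simp add: s_def)
    ultimately show ?thesis by (intro distr_of_distributed) (simp add: s_def)

  qed
qed



definition Gset :: "real \<Rightarrow> real \<Rightarrow> real \<Rightarrow> (real \<times> real) set" where
  "Gset \<rho> q1 q2 = {(g1, g2). ereal g1 \<le> Phi_inv q1 \<and>
                ereal (\<rho> * g1 + sqrt (1 - \<rho>\<^sup>2) * g2) \<le> Phi_inv q2}"

lemma Gamma_Gset: "Gamma \<rho> q1 q2 = measure SN2 (Gset \<rho> q1 q2)"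
  by (simp add: Gamma_def Gset_def)

lemma Gset_meas: "Gset \<rho> q1 q2 \<in> sets SN2"
proof -
  have "Gset \<rho> q1 q2 = {w \<in> space SN2. ereal (fst w) \<le> Phi_inv q1 \<and>
                ereal (\<rho> * fst w + sqrt (1 - \<rho>\<^sup>2) * snd w) \<le> Phi_inv q2}"
    by (auto simp: Gset_def)
  also have "\<dots> \<in> sets SN2" by measurable
  finally show ?thesis .
qed

lemma Gamma_lip1_aux:
  assumes q: "0 \<le> q1" "q1 \<le> q1'" "q1' \<le> 1"
  shows "Gamma \<rho> q1 q2 \<le> Gamma \<rho> q1' q2 \<and> Gamma \<rho> q1' q2 - Gamma \<rho> q1 q2 \<le> q1' - q1"
proof
  interpret P: prob_space SN2 by (rule prob_space_SN2)
  have sub: "Gset \<rho> q1 q2 \<subseteq> Gset \<rho> q1' q2"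
    using Phi_inv_mono[OF q(2)] by (auto simp: Gset_def intro: order_trans)
  show "Gamma \<rho> q1 q2 \<le> Gamma \<rho> q1' q2"
    unfolding Gamma_Gset by (rule P.finite_measure_mono[OF sub Gset_meas])
  show "Gamma \<rho> q1' q2 - Gamma \<rho> q1 q2 \<le> q1' - q1"
    unfolding Gamma_Gset
    by (rule lipschitz_core[OF prob_space_SN2 _ distr_fst Gset_meas Gset_meas sub _ q])
       (auto simp: Gset_def)
qed

lemma Gamma_lip2_aux:
  assumes q: "0 \<le> q2" "q2 \<le> q2'" "q2' \<le> 1" and r: "\<bar>\<rho>\<bar> \<le> 1"
  shows "Gamma \<rho> q1 q2 \<le> Gamma \<rho> q1 q2' \<and> Gamma \<rho> q1 q2' - Gamma \<rho> q1 q2 \<le> q2' - q2"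
proof
  interpret P: prob_space SN2 by (rule prob_space_SN2)
  have sub: "Gset \<rho> q1 q2 \<subseteq> Gset \<rho> q1 q2'"
    using Phi_inv_mono[OF q(2)] by (auto simp: Gset_def intro: order_trans)
  show "Gamma \<rho> q1 q2 \<le> Gamma \<rho> q1 q2'"
    unfolding Gamma_Gset by (rule P.finite_measure_mono[OF sub Gset_meas])
  show "Gamma \<rho> q1 q2' - Gamma \<rho> q1 q2 \<le> q2' - q2"
    unfolding Gamma_Gset
    by (rule lipschitz_core[OF prob_space_SN2 _ distr_Y[OF r] Gset_meas Gset_meas sub _ q])
       (auto simp: Gset_def)
qed

lemma Gamma_lip1:
  assumes "0 \<le> a" "a \<le> 1" "0 \<le> b" "b \<le> 1"
  shows "\<bar>Gamma \<rho> a q2 - Gamma \<rho> b q2\<bar> \<le> \<bar>a - b\<bar>"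
proof (cases "a \<le> b")
  case True then show ?thesis using Gamma_lip1_aux[of a b \<rho> q2] assms by auto
next
  case False then show ?thesis using Gamma_lip1_aux[of b a \<rho> q2] assms by auto
qed

lemma Gamma_lip2:
  assumes "0 \<le> a" "a \<le> 1" "0 \<le> b" "b \<le> 1" "\<bar>\<rho>\<bar> \<le> 1"
  shows "\<bar>Gamma \<rho> q1 a - Gamma \<rho> q1 b\<bar> \<le> \<bar>a - b\<bar>"
proof (cases "a \<le> b")
  case True then show ?thesis using Gamma_lip2_aux[of a b \<rho> q1] assms by auto
next
  case False then show ?thesis using Gamma_lip2_aux[of b a \<rho> q1] assms by auto
qed

lemma F_lip:
  assumes "0 \<le> a" "a \<le> 1" "0 \<le> b" "b \<le> 1" "0 \<le> a'" "a' \<le> 1" "0 \<le> b'" "b' \<le> 1" "\<bar>\<rho>\<bar> \<le> 1"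
  shows "(a + b - 2 * Gamma \<rho> a b) - (a' + b' - 2 * Gamma \<rho> a' b') \<le> 3 * (\<bar>a - a'\<bar> + \<bar>b - b'\<bar>)"
proof -
  have "\<bar>Gamma \<rho> a b - Gamma \<rho> a' b\<bar> \<le> \<bar>a - a'\<bar>" using Gamma_lip1 assms by simp
  moreover have "\<bar>Gamma \<rho> a' b - Gamma \<rho> a' b'\<bar> \<le> \<bar>b - b'\<bar>" using Gamma_lip2 assms by simp
  ultimately show ?thesis by (smt (verit) abs_ge_self abs_ge_minus_self)
qed



lemma end2: fixes x y :: real assumes "\<bar>x\<bar> \<le> 1" "\<bar>y\<bar> \<le> 1"
  shows "(1 - abs (x - y) - x*y)\<^sup>2 \<le> (1 - x\<^sup>2) * (1 - y\<^sup>2)"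
proof -
  have k: "0 \<le> 1 - x*y - abs (x - y)"
  proof (cases "x \<le> y")
    case True
    have "0 \<le> (1 + x) * (1 - y)" using assms by (intro mult_nonneg_nonneg) auto
    then show ?thesis using True by (simp add: algebra_simps)
  next
    case False
    have "0 \<le> (1 - x) * (1 + y)" using assms by (intro mult_nonneg_nonneg) auto
    then show ?thesis using False by (simp add: algebra_simps)
  qed
  have e: "(1 - x\<^sup>2) * (1 - y\<^sup>2) - (1 - abs (x - y) - x*y)\<^sup>2 = 2 * abs (x - y) * (1 - x*y - abs (x - y))"
    by (simp add: power2_eq_square algebra_simps abs_mult_self_eq)
  show ?thesis using e k by (smt (verit) abs_ge_zero mult_nonneg_nonneg)
qed

lemma end1: fixes x y :: real assumes "\<bar>x\<bar> \<le> 1" "\<bar>y\<bar> \<le> 1"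
  shows "(-1 + abs (x + y) - x*y)\<^sup>2 \<le> (1 - x\<^sup>2) * (1 - y\<^sup>2)"
proof -
  have k: "0 \<le> 1 + x*y - abs (x + y)"
  proof (cases "0 \<le> x + y")
    case True
    have "0 \<le> (1 - x) * (1 - y)" using assms by (intro mult_nonneg_nonneg) auto
    then show ?thesis using True by (simp add: algebra_simps)
  next
    case False
    have "0 \<le> (1 + x) * (1 + y)" using assms by (intro mult_nonneg_nonneg) auto
    then show ?thesis using False by (simp add: algebra_simps)
  qed
  have e: "(1 - x\<^sup>2) * (1 - y\<^sup>2) - (-1 + abs (x + y) - x*y)\<^sup>2 = 2 * abs (x + y) * (1 + x*y - abs (x + y))"
    by (simp add: power2_eq_square algebra_simps abs_mult_self_eq)
  show ?thesis using e k by (smt (verit) abs_ge_zero mult_nonneg_nonneg)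
qed

lemma rel_bias_bound: assumes "is_config \<theta>" shows "\<bar>rel_bias \<theta>\<bar> \<le> 1"
proof -
  obtain x y w where th: "\<theta> = (x, y, w)" by (metis prod_cases3)
  have c: "\<bar>x\<bar> \<le> 1" "\<bar>y\<bar> \<le> 1" "-1 + abs (x + y) \<le> w" "w \<le> 1 - abs (x - y)"
    using assms by (auto simp: is_config_def th)
  have sq: "(w - x*y)\<^sup>2 \<le> (1 - x\<^sup>2) * (1 - y\<^sup>2)"
  proof (cases "x*y \<le> w")
    case True
    have "(w - x*y)\<^sup>2 \<le> (1 - abs (x - y) - x*y)\<^sup>2"
      using True c by (intro power_mono) auto
    then show ?thesis using end2[OF c(1,2)] by linarith
  next
    case False
    have "(x*y - w)\<^sup>2 \<le> (x*y - (-1 + abs (x + y)))\<^sup>2"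
      using False c by (intro power_mono) auto
    moreover have "(x*y - w)\<^sup>2 = (w - x*y)\<^sup>2" "(x*y - (-1 + abs (x + y)))\<^sup>2 = (-1 + abs (x + y) - x*y)\<^sup>2"
      by (simp_all add: power2_commute)
    ultimately show ?thesis using end1[OF c(1,2)] by linarith
  qed
  define d where "d = sqrt ((1 - x\<^sup>2) * (1 - y\<^sup>2))"
  have "\<bar>w - x*y\<bar> \<le> d" unfolding d_def using real_sqrt_le_mono[OF sq] by simp
  moreover have "d \<ge> 0" unfolding d_def using sq
    by (metis real_sqrt_ge_zero order_trans zero_le_power2)
  ultimately show ?thesis
    by (auto simp: rel_bias_def th Let_def d_def[symmetric] abs_divide divide_le_eq_1)
qed



lemma embed_ok:
  fixes f :: "real \<Rightarrow> real"
  assumes "finite B" "\<And>x. 0 \<le> f x" "\<And>x. x \<notin> B \<Longrightarrow> f x = 0" "(\<Sum>b\<in>B. f b) = 1"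
  shows "(\<integral>\<^sup>+x. ennreal (f x) \<partial>count_space UNIV) = 1"
proof -
  have "(\<integral>\<^sup>+x. ennreal (f x) \<partial>count_space B) = (\<integral>\<^sup>+x. ennreal (f x) * indicator B x \<partial>count_space UNIV)"
    by (rule nn_integral_count_space_indicator) simp
  also have "(\<lambda>x. ennreal (f x) * indicator B x) = (\<lambda>x. ennreal (f x))"
    using assms(3) by (auto simp: indicator_def fun_eq_iff)
  finally have "(\<integral>\<^sup>+x. ennreal (f x) \<partial>count_space UNIV) = (\<Sum>b\<in>B. ennreal (f b))"
    using nn_integral_count_space_finite[OF assms(1)] by simp
  also have "\<dots> = 1" using assms(2,4) by simp
  finally show ?thesis .
qed

lemma biases_mem: "\<theta> \<in> set_pmf D \<Longrightarrow> fst \<theta> \<in> biases D \<and> fst (snd \<theta>) \<in> biases D"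
  by (auto simp: biases_def)

lemma term_le2:
  assumes "\<bar>t (fst \<theta>)\<bar> \<le> 1" "\<bar>t (fst (snd \<theta>))\<bar> \<le> 1"
  shows "(let qi = (1 - t (fst \<theta>)) / 2; qj = (1 - t (fst (snd \<theta>))) / 2 in
      qi + qj - 2 * Gamma (rel_bias \<theta>) qi qj) \<le> 2"
proof -
  have g: "0 \<le> Gamma (rel_bias \<theta>) ((1 - t (fst \<theta>)) / 2) ((1 - t (fst (snd \<theta>))) / 2)"
    by (simp add: Gamma_def)
  have h: "- 1 \<le> t (fst \<theta>)" "- 1 \<le> t (fst (snd \<theta>))" using assms by (auto simp: abs_le_iff)
  have "(1 - t (fst \<theta>)) / 2 \<le> 1" "(1 - t (fst (snd \<theta>))) / 2 \<le> 1" using h by auto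
  then show ?thesis using g unfolding Let_def by linarith
qed

lemma sound_t_le2:
  assumes "finite (set_pmf D)" "\<And>b. b \<in> biases D \<Longrightarrow> \<bar>t b\<bar> \<le> 1"
  shows "soundness_t D t \<le> 2"
proof -
  have "soundness_t D t \<le> (\<Sum>\<theta>\<in>set_pmf D. pmf D \<theta> * 2)"
    unfolding soundness_t_def
    by (rule sum_mono, rule mult_left_mono) (use assms biases_mem term_le2 in auto)
  also have "\<dots> = 2" using sum_pmf_eq_1[OF assms(1) order_refl] by (simp add: sum_distrib_right[symmetric])
  finally show ?thesis .
qed

lemma sound_t_diff:
  assumes "finite (set_pmf D)" "\<forall>\<theta>\<in>set_pmf D. is_config \<theta>"
    "\<And>b. b \<in> biases D \<Longrightarrow> \<bar>t b\<bar> \<le> 1" "\<And>b. b \<in> biases D \<Longrightarrow> \<bar>t' b\<bar> \<le> 1"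
    "\<And>b. b \<in> biases D \<Longrightarrow> \<bar>t b - t' b\<bar> \<le> e"
  shows "soundness_t D t - soundness_t D t' \<le> 3 * e"
proof -
  have per: "(let qi = (1 - t (fst \<theta>)) / 2; qj = (1 - t (fst (snd \<theta>))) / 2 in
      qi + qj - 2 * Gamma (rel_bias \<theta>) qi qj) -
     (let qi = (1 - t' (fst \<theta>)) / 2; qj = (1 - t' (fst (snd \<theta>))) / 2 in
      qi + qj - 2 * Gamma (rel_bias \<theta>) qi qj) \<le> 3 * e" if th: "\<theta> \<in> set_pmf D" for \<theta>
  proof -
    have r: "\<bar>rel_bias \<theta>\<bar> \<le> 1" using rel_bias_bound assms(2) th by blast
    have m: "fst \<theta> \<in> biases D" "fst (snd \<theta>) \<in> biases D" using biases_mem[OF th] by auto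
    define a where "a = (1 - t (fst \<theta>)) / 2"
    define b where "b = (1 - t (fst (snd \<theta>))) / 2"
    define a' where "a' = (1 - t' (fst \<theta>)) / 2"
    define b' where "b' = (1 - t' (fst (snd \<theta>))) / 2"
    have rng: "0 \<le> a" "a \<le> 1" "0 \<le> b" "b \<le> 1" "0 \<le> a'" "a' \<le> 1" "0 \<le> b'" "b' \<le> 1"
      using assms(3,4)[OF m(1)] assms(3,4)[OF m(2)]
      by (auto simp: a_def b_def a'_def b'_def abs_le_iff)
    have e1: "a' - a = (t (fst \<theta>) - t' (fst \<theta>)) / 2" "b' - b = (t (fst (snd \<theta>)) - t' (fst (snd \<theta>))) / 2"
      by (simp_all add: a_def b_def a'_def b'_def diff_divide_distrib)
    have "\<bar>a - a'\<bar> = \<bar>t (fst \<theta>) - t' (fst \<theta>)\<bar> / 2"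
      by (metis e1(1) abs_minus_commute abs_divide abs_numeral)
    moreover have "\<bar>b - b'\<bar> = \<bar>t (fst (snd \<theta>)) - t' (fst (snd \<theta>))\<bar> / 2"
      by (metis e1(2) abs_minus_commute abs_divide abs_numeral)
    ultimately have d: "\<bar>a - a'\<bar> \<le> e / 2" "\<bar>b - b'\<bar> \<le> e / 2"
      using assms(5)[OF m(1)] assms(5)[OF m(2)] by simp_all
    have "(a + b - 2 * Gamma (rel_bias \<theta>) a b) - (a' + b' - 2 * Gamma (rel_bias \<theta>) a' b')
          \<le> 3 * (\<bar>a - a'\<bar> + \<bar>b - b'\<bar>)" by (rule F_lip[OF rng r])
    also have "\<dots> \<le> 3 * e"
    proof -
      have "\<bar>a - a'\<bar> + \<bar>b - b'\<bar> \<le> e / 2 + e / 2" using add_mono[OF d] .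
      then show ?thesis by simp
    qed
    finally show ?thesis by (simp add: Let_def a_def b_def a'_def b'_def)
  qed
  have "soundness_t D t - soundness_t D t' = (\<Sum>\<theta>\<in>set_pmf D. pmf D \<theta> *
     ((let qi = (1 - t (fst \<theta>)) / 2; qj = (1 - t (fst (snd \<theta>))) / 2 in
      qi + qj - 2 * Gamma (rel_bias \<theta>) qi qj) -
     (let qi = (1 - t' (fst \<theta>)) / 2; qj = (1 - t' (fst (snd \<theta>))) / 2 in
      qi + qj - 2 * Gamma (rel_bias \<theta>) qi qj)))"
    unfolding soundness_t_def by (simp add: sum_subtractf right_diff_distrib)
  also have "\<dots> \<le> (\<Sum>\<theta>\<in>set_pmf D. pmf D \<theta> * (3 * e))"
    by (rule sum_mono, rule mult_left_mono) (use per in auto)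
  also have "\<dots> = 3 * e" using sum_pmf_eq_1[OF assms(1) order_refl] by (simp add: sum_distrib_right[symmetric])
  finally show ?thesis .
qed



lemma nu_exists:
  fixes B :: "real set"
  assumes fin: "finite B" and p: "p \<in> B" "p > 0" and n: "n \<in> B" "n < 0"
  shows "\<exists>\<nu> m. m > 0 \<and> (\<forall>b. 0 \<le> \<nu> b) \<and> (\<forall>b. b \<notin> B \<longrightarrow> \<nu> b = 0) \<and> (\<forall>b\<in>B. \<nu> b \<ge> m)
     \<and> (\<Sum>b\<in>B. \<nu> b) = 1 \<and> (\<Sum>b\<in>B. \<nu> b * b) = 0"
proof -
  define S where "S = (\<Sum>b\<in>B. b)"
  obtain c where c: "c \<in> B" "c \<noteq> 0" "S / c \<le> 0"
  proof (cases "S \<ge> 0")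
    case True then show ?thesis using that[of n] n by (simp add: divide_nonneg_neg)
  next
    case False then show ?thesis using that[of p] p by (simp add: divide_neg_pos less_imp_le)
  qed
  define w where "w b = 1 + (if b = c then - S / c else 0)" for b
  have w1: "w b \<ge> 1" for b using c by (simp add: w_def)
  define W where "W = (\<Sum>b\<in>B. w b)"
  have "card B \<ge> 1" using fin p by (metis card_0_eq empty_iff less_one not_less)
  have "W \<ge> (\<Sum>b\<in>B. 1)" unfolding W_def by (rule sum_mono) (use w1 in auto)
  then have W1: "W \<ge> 1" using \<open>card B \<ge> 1\<close> by simp
  have ws: "(\<Sum>b\<in>B. w b * b) = 0"
  proof -
    have "(\<Sum>b\<in>B. w b * b) = (\<Sum>b\<in>B. b) + (\<Sum>b\<in>B. (if b = c then - S / c else 0) * b)"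
      by (simp add: w_def distrib_right sum.distrib)
    also have "(\<Sum>b\<in>B. (if b = c then - S / c else 0) * b) = - S / c * c"
      using fin c(1) by (simp add: if_distrib[of "\<lambda>x. x * _"] sum.delta cong: if_cong)
    also have "\<dots> = - S" using c(2) by simp
    finally show ?thesis by (simp add: S_def)
  qed
  define \<nu> where "\<nu> b = (if b \<in> B then w b / W else 0)" for b
  show ?thesis
  proof (intro exI[of _ \<nu>] exI[of _ "1 / W"] conjI allI impI ballI)
    show "0 < 1 / W" using W1 by simp
    show "0 \<le> \<nu> b" for b using W1 w1[of b] by (simp add: \<nu>_def)
    show "\<nu> b = 0" if "b \<notin> B" for b using that by (simp add: \<nu>_def)
    show "1 / W \<le> \<nu> b" if "b \<in> B" for b using that W1 w1[of b] by (simp add: \<nu>_def divide_right_mono)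
    show "(\<Sum>b\<in>B. \<nu> b) = 1" using W1 by (simp add: \<nu>_def W_def sum_divide_distrib[symmetric])
    have "(\<Sum>b\<in>B. \<nu> b * b) = (\<Sum>b\<in>B. w b * b) / W"
      by (simp add: \<nu>_def sum_divide_distrib)
    then show "(\<Sum>b\<in>B. \<nu> b * b) = 0" using ws by simp
  qed
qed

lemma feasible_shift:
  fixes t :: "real \<Rightarrow> real" and B :: "real set"
  assumes fin: "finite B" and sp: "set_pmf \<mu> \<subseteq> B" and tb: "\<forall>b\<in>B. t b \<in> {-1..1}"
  defines "s \<equiv> (\<Sum>b\<in>B. pmf \<mu> b * t b)"
  defines "t' \<equiv> (\<lambda>b. (t b - s) / (1 + \<bar>s\<bar>))"
  shows "(\<forall>b\<in>B. t' b \<in> {-1..1}) \<and> (\<Sum>b\<in>B. pmf \<mu> b * t' b) = 0 \<and> (\<forall>b\<in>B. \<bar>t b - t' b\<bar> \<le> 2 * \<bar>s\<bar>)"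
proof (intro conjI ballI)
  have pos: "1 + \<bar>s\<bar> > 0" by simp
  fix b assume b: "b \<in> B"
  have tb1: "\<bar>t b\<bar> \<le> 1" using tb b by auto
  have "\<bar>t b - s\<bar> \<le> 1 + \<bar>s\<bar>" using tb1 by linarith
  then have "\<bar>t' b\<bar> \<le> 1" using pos by (simp add: t'_def abs_divide divide_le_eq_1)
  then show "t' b \<in> {-1..1}" by (simp add: abs_le_iff)
next
  have pos: "1 + \<bar>s\<bar> > 0" by simp
  fix b assume b: "b \<in> B"
  have tb1: "\<bar>t b\<bar> \<le> 1" using tb b by auto
  have "t b - t' b = (t b * \<bar>s\<bar> + s) / (1 + \<bar>s\<bar>)"
    using pos by (simp add: t'_def field_simps)
  also have "\<bar>(t b * \<bar>s\<bar> + s) / (1 + \<bar>s\<bar>)\<bar> = \<bar>t b * \<bar>s\<bar> + s\<bar> / (1 + \<bar>s\<bar>)"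
    using pos by (simp add: abs_divide)
  also have "\<dots> \<le> \<bar>t b * \<bar>s\<bar> + s\<bar> / 1"
    by (rule divide_left_mono) auto
  also have "\<dots> = \<bar>t b * \<bar>s\<bar> + s\<bar>" by simp
  also have "\<dots> \<le> \<bar>t b\<bar> * \<bar>s\<bar> + \<bar>s\<bar>" by (metis abs_mult abs_abs abs_triangle_ineq)
  also have "\<dots> \<le> 1 * \<bar>s\<bar> + \<bar>s\<bar>" using tb1 by (intro add_right_mono mult_right_mono) auto
  finally show "\<bar>t b - t' b\<bar> \<le> 2 * \<bar>s\<bar>" by simp
next
  have s1: "(\<Sum>b\<in>B. pmf \<mu> b) = 1" by (rule sum_pmf_eq_1[OF fin sp])
  have "(\<Sum>b\<in>B. pmf \<mu> b * t' b) = ((\<Sum>b\<in>B. pmf \<mu> b * t b) - s * (\<Sum>b\<in>B. pmf \<mu> b)) / (1 + \<bar>s\<bar>)"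
    by (simp add: t'_def sum_divide_distrib[symmetric] right_diff_distrib sum_subtractf sum_distrib_left mult.commute)
  then show "(\<Sum>b\<in>B. pmf \<mu> b * t' b) = 0" using s1 by (simp add: s_def)
qed

theorem corollary2p17:
  fixes B :: "real set"
  assumes "\<exists>b\<in>B. b > 0" and "\<exists>b\<in>B. b < 0"
  shows "\<exists>\<epsilon>0 C. \<epsilon>0 > 0 \<and> C > 0 \<and>
    (\<forall>D \<mu>. is_blueprint D B \<mu> \<longrightarrow>
      (\<forall>\<epsilon>. 0 < \<epsilon> \<and> \<epsilon> < \<epsilon>0 \<longrightarrow>
        (\<exists>\<mu>'. is_blueprint D B \<mu>' \<and>
              completeness D = completeness D \<and>
              soundness D B \<mu>' \<le> soundness D B \<mu> + C * \<epsilon> \<and>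
              (\<forall>b\<in>B. pmf \<mu>' b \<ge> \<epsilon>))))"
proof (cases "finite B")
  case False
  have nb: "\<not> is_blueprint D B \<mu>" for D \<mu>
  proof
    assume "is_blueprint D B \<mu>"
    then have "finite (set_pmf D)" "B = biases D" by (auto simp: is_blueprint_def)
    then have "finite B" by (simp add: biases_def)
    with False show False by simp
  qed
  show ?thesis by (rule exI[of _ 1], rule exI[of _ 1]) (simp add: nb)
next
  case True
  obtain p where p: "p \<in> B" "p > 0" using assms(1) by auto
  obtain n where n: "n \<in> B" "n < 0" using assms(2) by auto
  obtain \<nu> m where m: "m > 0" and nu0: "\<And>b. 0 \<le> \<nu> b" and nuB: "\<And>b. b \<notin> B \<Longrightarrow> \<nu> b = 0"
    and num: "\<And>b. b \<in> B \<Longrightarrow> \<nu> b \<ge> m" and nu1: "(\<Sum>b\<in>B. \<nu> b) = 1"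
    and numean: "(\<Sum>b\<in>B. \<nu> b * b) = 0"
    using nu_exists[OF True p n] by blast
  show ?thesis
  proof (rule exI[of _ "m / 2"], rule exI[of _ "12 / m"], intro conjI allI impI)
    show "m / 2 > 0" using m by auto
    show "12 / m > 0" using m by auto
    fix D \<mu> \<epsilon> assume bp: "is_blueprint D B \<mu>" and eps: "0 < \<epsilon> \<and> \<epsilon> < m / 2"
    have finD: "finite (set_pmf D)" and cfg: "\<forall>\<theta>\<in>set_pmf D. is_config \<theta>" and BD: "B = biases D"
      and spm: "set_pmf \<mu> \<subseteq> B" and mmean: "(\<Sum>b\<in>B. pmf \<mu> b * b) = 0"
      using bp by (auto simp: is_blueprint_def)
    define \<delta> where "\<delta> = \<epsilon> / m"
    have d0: "0 < \<delta>" using eps m by (simp add: \<delta>_def)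
    have d1: "\<delta> < 1 / 2" using eps m by (simp add: \<delta>_def divide_less_eq)
    have deps: "\<delta> * m = \<epsilon>" using m by (simp add: \<delta>_def)
    define f where "f b = (1 - \<delta>) * pmf \<mu> b + \<delta> * \<nu> b" for b
    have fnn: "0 \<le> f b" for b using d0 d1 nu0[of b] by (simp add: f_def)
    have pmf0: "pmf \<mu> b = 0" if "b \<notin> B" for b
      using that spm by (meson set_pmf_iff subsetD)
    have f0: "f b = 0" if "b \<notin> B" for b using that pmf0 nuB by (simp add: f_def)
    have s1: "(\<Sum>b\<in>B. pmf \<mu> b) = 1" by (rule sum_pmf_eq_1[OF True spm])
    have fs: "(\<Sum>b\<in>B. f b) = 1"
      using s1 nu1 by (simp add: f_def sum.distrib sum_distrib_left[symmetric])
    have ni: "(\<integral>\<^sup>+x. ennreal (f x) \<partial>count_space UNIV) = 1"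
      by (rule embed_ok[OF True fnn f0 fs])
    define \<mu>' where "\<mu>' = embed_pmf f"
    have pm: "pmf \<mu>' b = f b" for b unfolding \<mu>'_def by (rule pmf_embed_pmf[OF fnn ni])
    have spm': "set_pmf \<mu>' \<subseteq> B"
    proof
      fix x assume "x \<in> set_pmf \<mu>'"
      then have "f x \<noteq> 0" by (simp add: set_pmf_iff pm)
      then show "x \<in> B" using f0 by blast
    qed
    have fmean: "(\<Sum>b\<in>B. f b * b) = 0"
    proof -
      have "(\<Sum>b\<in>B. f b * b) = (1 - \<delta>) * (\<Sum>b\<in>B. pmf \<mu> b * b) + \<delta> * (\<Sum>b\<in>B. \<nu> b * b)"
        by (simp add: f_def distrib_right sum.distrib sum_distrib_left mult.assoc)
      then show ?thesis using mmean numean by simp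
    qed
    have bp': "is_blueprint D B \<mu>'"
      unfolding is_blueprint_def using finD cfg BD spm' fmean by (simp add: pm)
    have lower: "pmf \<mu>' b \<ge> \<epsilon>" if "b \<in> B" for b
    proof -
      have "(1 - \<delta>) * pmf \<mu> b \<ge> 0" using d1 by simp
      moreover have "\<delta> * \<nu> b \<ge> \<delta> * m" using num[OF that] d0 by simp
      ultimately show ?thesis using deps by (simp add: pm f_def)
    qed
    define Sset where "Sset \<mu>0 = {soundness_t D t | t.
       (\<forall>b\<in>B. t b \<in> {-1..1}) \<and> (\<Sum>b\<in>B. pmf \<mu>0 b * t b) = 0}" for \<mu>0
    have bdd: "bdd_above (Sset \<mu>0)" for \<mu>0
    proof (rule bdd_aboveI[of _ 2])
      fix x assume "x \<in> Sset \<mu>0"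
      then obtain t where "x = soundness_t D t" "\<forall>b\<in>B. t b \<in> {-1..1}" by (auto simp: Sset_def)
      then show "x \<le> 2" using sound_t_le2[OF finD, of t] BD by (auto simp: abs_le_iff)
    qed
    have "soundness_t D (\<lambda>_. 0) \<in> Sset \<mu>'"
      unfolding Sset_def by (rule CollectI, rule exI[of _ "\<lambda>_. 0"]) auto
    then have ne: "Sset \<mu>' \<noteq> {}" by blast
    have "Sup (Sset \<mu>') \<le> Sup (Sset \<mu>) + 12 / m * \<epsilon>"
    proof (rule cSup_least[OF ne])
      fix x assume "x \<in> Sset \<mu>'"
      then obtain t where x: "x = soundness_t D t" and tb: "\<forall>b\<in>B. t b \<in> {-1..1}"
        and tm: "(\<Sum>b\<in>B. pmf \<mu>' b * t b) = 0" by (auto simp: Sset_def)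
      define s where "s = (\<Sum>b\<in>B. pmf \<mu> b * t b)"
      define t' where "t' = (\<lambda>b. (t b - s) / (1 + \<bar>s\<bar>))"
      have fs: "(\<forall>b\<in>B. t' b \<in> {-1..1}) \<and> (\<Sum>b\<in>B. pmf \<mu> b * t' b) = 0 \<and> (\<forall>b\<in>B. \<bar>t b - t' b\<bar> \<le> 2 * \<bar>s\<bar>)"
        unfolding t'_def s_def by (rule feasible_shift[OF True spm tb])
      define r where "r = (\<Sum>b\<in>B. \<nu> b * t b)"
      have eq: "(1 - \<delta>) * s + \<delta> * r = 0"
      proof -
        have "(\<Sum>b\<in>B. pmf \<mu>' b * t b) = (1 - \<delta>) * s + \<delta> * r"
          by (simp add: pm f_def s_def r_def distrib_right sum.distrib sum_distrib_left mult.assoc)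
        then show ?thesis using tm by simp
      qed
      have r1: "\<bar>r\<bar> \<le> 1"
      proof -
        have "\<bar>r\<bar> \<le> (\<Sum>b\<in>B. \<bar>\<nu> b * t b\<bar>)" unfolding r_def by (rule sum_abs)
        also have "\<dots> \<le> (\<Sum>b\<in>B. \<nu> b)"
        proof (rule sum_mono)
          fix b assume "b \<in> B"
          then have "\<bar>t b\<bar> \<le> 1" using tb by auto
          then show "\<bar>\<nu> b * t b\<bar> \<le> \<nu> b" using nu0[of b]
            by (simp add: abs_mult mult_left_le)
        qed
        finally show ?thesis using nu1 by simp
      qed
      have s2: "\<bar>s\<bar> \<le> 2 * \<delta>"
      proof -
        have "(1 - \<delta>) * \<bar>s\<bar> = \<delta> * \<bar>r\<bar>"
        proof -
          have "(1 - \<delta>) * s = - (\<delta> * r)" using eq by linarith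
          then have "\<bar>(1 - \<delta>) * s\<bar> = \<bar>\<delta> * r\<bar>" by simp
          then show ?thesis using d0 d1 by (simp add: abs_mult)
        qed
        also have "\<dots> \<le> \<delta>" using r1 d0 by (simp add: mult_left_le)
        finally have a: "(1 - \<delta>) * \<bar>s\<bar> \<le> \<delta>" .
        have "(1 / 2) * \<bar>s\<bar> \<le> (1 - \<delta>) * \<bar>s\<bar>" using d1 by (intro mult_right_mono) auto
        then show ?thesis using a by linarith
      qed
      have close: "\<And>b. b \<in> biases D \<Longrightarrow> \<bar>t b - t' b\<bar> \<le> 4 * \<delta>"
        using fs s2 BD by fastforce
      have "soundness_t D t - soundness_t D t' \<le> 3 * (4 * \<delta>)"
        by (rule sound_t_diff[OF finD cfg]) (use tb fs BD close in \<open>auto simp: abs_le_iff\<close>)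
      moreover have "soundness_t D t' \<le> Sup (Sset \<mu>)"
        by (rule cSup_upper[OF _ bdd]) (use fs in \<open>auto simp: Sset_def\<close>)
      moreover have "3 * (4 * \<delta>) = 12 / m * \<epsilon>" using m by (simp add: \<delta>_def)
      ultimately show "x \<le> Sup (Sset \<mu>) + 12 / m * \<epsilon>" using x by linarith
    qed
    then have "soundness D B \<mu>' \<le> soundness D B \<mu> + 12 / m * \<epsilon>"
      by (simp add: soundness_def Sset_def)
    then show "\<exists>\<mu>'. is_blueprint D B \<mu>' \<and> completeness D = completeness D \<and>
        soundness D B \<mu>' \<le> soundness D B \<mu> + 12 / m * \<epsilon> \<and> (\<forall>b\<in>B. \<epsilon> \<le> pmf \<mu>' b)"
      using bp' lower by blast
  qed
qed

end
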